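(* Let $\alpha\geq 2$, $\beta\geq 1$ and $n\geq 0$ be integers. (i) If either $\alpha$ is odd and $\beta$ is even, or both $\alpha$ and $\beta$ are even, then $$\overline{B}_{2^\alpha,3^\beta}(12n+3)\equiv 0\pmod 8\quad\text{and}\quad \overline{B}_{2^\alpha,3^\beta}(12n+7)\equiv 0\pmod 8.$$ (ii) If either $\alpha$ and $\beta$ have different parity, or both $\alpha$ and $\beta$ are even, then $$\overline{B}_{2^\alpha,3^\beta}(12n+11)\equiv 0\pmod 8.$$
   Context: An overpartition of a nonnegative integer $n$ is a partition of $n$ (a non-increasing sequence of positive integers summing to $n$) in which the first occurrence of each distinct part may be overlined. For relatively prime integers $\ell_1,\ell_2>1$, an $(\ell_1,\ell_2)$-biregular overpartition of $n$ is an overpartition of $n$ none of whose parts is divisible by $\ell_1$ or by $\ell_2$, and $\overline{B}_{\ell_1,\ell_2}(n)$ denotes the number of such overpartitions ($\overline{B}_{\ell_1,\ell_2}(0)=1$). Equivalently, writing $f_k=(q^k;q^k)_\infty=\prod_{m\ge1}(1-q^{km})$ for $|q|<1$, $$\sum_{n\ge0}\overline{B}_{\ell_1,\ell_2}(n)q^n=\frac{f_2\, f_{\ell_1}^2\, f_{\ell_2}^2\, f_{2\ell_1\ell_2}}{f_1^2\, f_{2\ell_1}\, f_{2\ell_2}\, f_{\ell_1\ell_2}^2}.$$ *)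

theory Defs
  imports Main "HOL-Library.Multiset"
begin

text \<open>An overpartition of n is represented as a pair (P, S): P is the multiset of
  parts of a partition of n (all parts positive, summing to n), and S is the set of
  distinct part sizes whose first occurrence is overlined (so S \<subseteq> set_mset P).\<close>

definition overpartitions :: "nat \<Rightarrow> (nat multiset \<times> nat set) set" where
  "overpartitions n = {(P, S). (\<forall>p \<in># P. 0 < p) \<and> sum_mset P = n \<and> S \<subseteq> set_mset P}"

definition biregular_overpartitions :: "nat \<Rightarrow> nat \<Rightarrow> nat \<Rightarrow> (nat multiset \<times> nat set) set" where
  "biregular_overpartitions l1 l2 n =
     {(P, S) \<in> overpartitions n. \<forall>p \<in># P. \<not> l1 dvd p \<and> \<not> l2 dvd p}"

definition Bbar :: "nat \<Rightarrow> nat \<Rightarrow> nat \<Rightarrow> nat" where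
  "Bbar l1 l2 n = card (biregular_overpartitions l1 l2 n)"

end

theory Submission
  imports Defs "HOL-Computational_Algebra.Primes" "HOL-Library.Disjoint_Sets"
begin
definition Pset :: "nat \<Rightarrow> nat \<Rightarrow> nat \<Rightarrow> nat multiset set" where "Pset l1 l2 n = {P. (\<forall>p\<in>#P. \<not> l1 dvd p \<and> \<not> l2 dvd p) \<and> sum_mset P = n}"

lemma bo_Sigma: "biregular_overpartitions l1 l2 n = Sigma (Pset l1 l2 n) (\<lambda>P. Pow (set_mset P))"
  unfolding biregular_overpartitions_def overpartitions_def Pset_def
  by (auto intro!: Nat.gr0I)

lemma mem_le_sum_mset: assumes "(p::nat) \<in># P" shows "p \<le> sum_mset P"
proof -
  obtain R where "P = add_mset p R" using multi_member_split[OF assms] by blast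
  thus ?thesis by simp
qed

lemma size_le_sum_mset: "(\<forall>p\<in>#P. (0::nat) < p) \<Longrightarrow> size P \<le> sum_mset P"
  by (induction P) (auto simp: Suc_le_eq)

lemma Pset_finite: "finite (Pset l1 l2 n)"
proof -
  have "Pset l1 l2 n \<subseteq> (\<Union>k\<in>{..n}. multisets_of_size {..n} k)"
  proof
    fix P assume P: "P \<in> Pset l1 l2 n"
    hence pos: "\<forall>p\<in>#P. 0 < p" unfolding Pset_def by (auto intro!: Nat.gr0I)
    have "size P \<le> n" using size_le_sum_mset[OF pos] P unfolding Pset_def by auto
    moreover have "set_mset P \<subseteq> {..n}" using P mem_le_sum_mset unfolding Pset_def by fastforce
    ultimately show "P \<in> (\<Union>k\<in>{..n}. multisets_of_size {..n} k)"
      unfolding multisets_of_size_def by auto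
  qed
  thus ?thesis by (rule finite_subset) auto
qed

lemma Bbar_sum: "Bbar l1 l2 n = (\<Sum>P\<in>Pset l1 l2 n. 2 ^ card (set_mset P))"
  unfolding Bbar_def bo_Sigma using Pset_finite
  by (subst card_SigmaI) (auto simp: card_Pow intro!: sum.cong)

lemma Bbar_mod8:
  assumes "n > 0"
  shows "\<exists>k. Bbar l1 l2 n = 2 * card {P\<in>Pset l1 l2 n. card (set_mset P) = 1}
                + 4 * card {P\<in>Pset l1 l2 n. card (set_mset P) = 2} + 8 * k"
proof -
  let ?S = "Pset l1 l2 n"
  let ?c = "\<lambda>P. card (set_mset P)"
  have ne: "?c P \<ge> 1" if "P \<in> ?S" for P
  proof -
    have "sum_mset P = n" using that unfolding Pset_def by simp
    hence "P \<noteq> {#}" using assms by auto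
    thus ?thesis by (simp add: Suc_le_eq card_gt_0_iff)
  qed
  have split: "?S = {P\<in>?S. ?c P = 1} \<union> ({P\<in>?S. ?c P = 2} \<union> {P\<in>?S. ?c P \<ge> 3})"
    using ne by force
  have fin: "finite {P\<in>?S. ?c P = 1}" "finite {P\<in>?S. ?c P = 2}" "finite {P\<in>?S. ?c P \<ge> 3}"
    using Pset_finite by auto
  have "Bbar l1 l2 n = (\<Sum>P\<in>{P\<in>?S. ?c P = 1}. 2 ^ ?c P) + ((\<Sum>P\<in>{P\<in>?S. ?c P = 2}. 2 ^ ?c P)
      + (\<Sum>P\<in>{P\<in>?S. ?c P \<ge> 3}. 2 ^ ?c P))"
    unfolding Bbar_sum
    by (subst split, subst sum.union_disjoint, use fin in auto,
        subst sum.union_disjoint, auto)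
  also have "(\<Sum>P\<in>{P\<in>?S. ?c P = 1}. 2 ^ ?c P) = 2 * card {P\<in>?S. ?c P = 1}" by simp
  also have "(\<Sum>P\<in>{P\<in>?S. ?c P = 2}. 2 ^ ?c P) = 4 * card {P\<in>?S. ?c P = 2}" by simp
  also have "8 dvd (\<Sum>P\<in>{P\<in>?S. ?c P \<ge> 3}. (2::nat) ^ ?c P)"
  proof (rule dvd_sum)
    fix P assume "P \<in> {P\<in>?S. ?c P \<ge> 3}"
    hence "?c P = 3 + (?c P - 3)" by auto
    hence "(2::nat) ^ ?c P = 2 ^ 3 * 2 ^ (?c P - 3)" by (metis power_add)
    hence "(2::nat) ^ ?c P = 8 * 2 ^ (?c P - 3)" by simp
    thus "8 dvd (2::nat) ^ ?c P" by simp
  qed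
  then obtain k where "(\<Sum>P\<in>{P\<in>?S. ?c P \<ge> 3}. (2::nat) ^ ?c P) = 8 * k" by auto
  ultimately show ?thesis by auto
qed

definition Dset :: "nat \<Rightarrow> nat \<Rightarrow> nat \<Rightarrow> nat set" where
  "Dset l1 l2 u = {a. a dvd u \<and> \<not> l1 dvd a \<and> \<not> l2 dvd a}"

lemma Dset_finite: "u > 0 \<Longrightarrow> finite (Dset l1 l2 u)"
  unfolding Dset_def by (rule finite_subset[of _ "{..u}"]) (auto dest: dvd_imp_le)

lemma card_P1:
  assumes "n > 0"
  shows "card {P\<in>Pset l1 l2 n. card (set_mset P) = 1} = card (Dset l1 l2 n)"
proof -
  let ?f = "\<lambda>a. replicate_mset (n div a) a"
  have "{P\<in>Pset l1 l2 n. card (set_mset P) = 1} = ?f ` Dset l1 l2 n"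
  proof (intro equalityI subsetI)
    fix P assume P: "P \<in> {P\<in>Pset l1 l2 n. card (set_mset P) = 1}"
    then obtain a where a: "set_mset P = {a}" by (auto simp: card_Suc_eq)
    hence Pe: "P = replicate_mset (size P) a" using set_mset_subset_singletonD[of P a] by auto
    have "sum_mset P = n" using P unfolding Pset_def by auto
    hence sum: "size P * a = n" by (subst (asm) Pe) simp
    have "a \<in> Dset l1 l2 n" using P a sum unfolding Pset_def Dset_def by auto
    moreover have "a > 0" using sum assms by (cases a) auto
    hence "n div a = size P" using sum by auto
    ultimately show "P \<in> ?f ` Dset l1 l2 n"
      by (intro image_eqI[where x=a]) (simp_all add: Pe[symmetric])
  next
    fix P assume "P \<in> ?f ` Dset l1 l2 n"
    then obtain a where a: "a \<in> Dset l1 l2 n" "P = ?f a" by auto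
    have "a > 0" "a dvd n" using a assms unfolding Dset_def by (auto intro!: Nat.gr0I)
    hence "n div a > 0" using assms by (auto simp: div_greater_zero_iff dvd_imp_le)
    thus "P \<in> {P\<in>Pset l1 l2 n. card (set_mset P) = 1}"
      using a \<open>a dvd n\<close> unfolding Pset_def Dset_def by auto
  qed
  moreover have "inj_on ?f (Dset l1 l2 n)"
  proof
    fix a b assume "a \<in> Dset l1 l2 n" "b \<in> Dset l1 l2 n" "?f a = ?f b"
    moreover have "n div a > 0" using \<open>a \<in> Dset l1 l2 n\<close> assms unfolding Dset_def
      by (metis dvd_div_eq_0_iff mem_Collect_eq neq0_conv)
    ultimately have "a \<in># ?f b" by (metis in_replicate_mset)
    thus "a = b" by (simp split: if_splits)
  qed
  ultimately show ?thesis by (simp add: card_image)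
qed

definition Q2 :: "nat \<Rightarrow> nat \<Rightarrow> nat \<Rightarrow> (nat \<times> nat \<times> nat \<times> nat) set" where
  "Q2 l1 l2 n = {(a,i,b,j). \<not> l1 dvd a \<and> \<not> l2 dvd a \<and> \<not> l1 dvd b \<and> \<not> l2 dvd b
      \<and> a < b \<and> 0 < i \<and> 0 < j \<and> i*a + j*b = n}"

lemma card_P2:
  shows "card {P\<in>Pset l1 l2 n. card (set_mset P) = 2} = card (Q2 l1 l2 n)"
proof -
  let ?f = "\<lambda>(a,i,b,j). replicate_mset i a + replicate_mset j b"
  have "{P\<in>Pset l1 l2 n. card (set_mset P) = 2} = ?f ` Q2 l1 l2 n"
  proof (intro equalityI subsetI)
    fix P assume P: "P \<in> {P\<in>Pset l1 l2 n. card (set_mset P) = 2}"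
    then obtain a0 b0 where ab0: "set_mset P = {a0, b0}" "a0 \<noteq> b0"
      by (auto simp: card_2_iff)
    define a where "a = min a0 b0"
    define b where "b = max a0 b0"
    have ab: "set_mset P = {a, b}" "a < b" using ab0 unfolding a_def b_def
      by (auto simp: min_def max_def insert_commute)
    define i where "i = count P a"
    define j where "j = count P b"
    have Pe: "P = replicate_mset i a + replicate_mset j b"
    proof (rule multiset_eqI)
      fix x show "count P x = count (replicate_mset i a + replicate_mset j b) x"
        using ab unfolding i_def j_def
        by (cases "x = a"; cases "x = b") (auto simp: count_eq_zero_iff)
    qed
    have "i > 0" "j > 0" using ab unfolding i_def j_def by auto
    moreover have "i * a + j * b = n" using P Pe unfolding Pset_def by auto
    moreover have "\<not> l1 dvd a \<and> \<not> l2 dvd a \<and> \<not> l1 dvd b \<and> \<not> l2 dvd b"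
      using P ab unfolding Pset_def by auto
    ultimately show "P \<in> ?f ` Q2 l1 l2 n" using Pe ab
      unfolding Q2_def by (auto intro!: image_eqI[where x="(a,i,b,j)"])
  next
    fix P assume "P \<in> ?f ` Q2 l1 l2 n"
    then obtain a i b j where q: "(a,i,b,j) \<in> Q2 l1 l2 n" "P = ?f (a,i,b,j)" by auto
    hence "set_mset P = {a, b}" "a \<noteq> b" unfolding Q2_def by auto
    thus "P \<in> {P\<in>Pset l1 l2 n. card (set_mset P) = 2}"
      using q unfolding Pset_def Q2_def by auto
  qed
  moreover have "inj_on ?f (Q2 l1 l2 n)"
  proof (rule inj_onI)
    fix x y assume qx: "x \<in> Q2 l1 l2 n" and qy: "y \<in> Q2 l1 l2 n" and e0: "?f x = ?f y"
    obtain a i b j where x: "x = (a,i,b,j)" by (cases x) auto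
    obtain a' i' b' j' where y: "y = (a',i',b',j')" by (cases y) auto
    have q: "(a,i,b,j) \<in> Q2 l1 l2 n" "(a',i',b',j') \<in> Q2 l1 l2 n" using qx qy x y by auto
    have e: "replicate_mset i a + replicate_mset j b = replicate_mset i' a' + replicate_mset j' b'"
      using e0 x y by simp
    have s1: "set_mset (replicate_mset i a + replicate_mset j b) = {a,b}" using q(1) unfolding Q2_def by auto
    have s2: "set_mset (replicate_mset i' a' + replicate_mset j' b') = {a',b'}" using q(2) unfolding Q2_def by auto
    have s: "{a,b} = {a',b'}" using s1 s2 e by simp
    have "a < b" "a' < b'" using q unfolding Q2_def by auto
    hence "a = a'" "b = b'" using s by (auto simp: doubleton_eq_iff)
    moreover have "i = i'" using arg_cong[OF e, of "\<lambda>P. count P a"] \<open>a < b\<close> \<open>a = a'\<close> \<open>b = b'\<close> by auto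
    moreover have "j = j'" using arg_cong[OF e, of "\<lambda>P. count P b"] \<open>a < b\<close> \<open>a = a'\<close> \<open>b = b'\<close> by auto
    ultimately show "x = y" using x y by auto
  qed
  ultimately show ?thesis by (simp add: card_image)
qed

definition Q :: "nat \<Rightarrow> nat \<Rightarrow> nat \<Rightarrow> (nat \<times> nat \<times> nat \<times> nat) set" where
  "Q l1 l2 n = {(a,i,b,j). \<not> l1 dvd a \<and> \<not> l2 dvd a \<and> \<not> l1 dvd b \<and> \<not> l2 dvd b
      \<and> 0 < i \<and> 0 < j \<and> i*a + j*b = n}"

lemma le_of_mult: assumes "0 < (i::nat)" "i * a + c = n" shows "a \<le> n"
proof -
  have "1 * a \<le> i * a" using assms(1) by (intro mult_le_mono1) simp
  thus ?thesis using assms(2) by linarith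
qed

lemma Q_finite: "finite (Q l1 l2 n)"
proof -
  have "Q l1 l2 n \<subseteq> {..n} \<times> {..n} \<times> {..n} \<times> {..n}"
  proof (rule subsetI)
    fix x assume "x \<in> Q l1 l2 n"
    then obtain a i b j where x: "x = (a,i,b,j)" "(a,i,b,j) \<in> Q l1 l2 n" by (cases x) auto
    hence h: "0 < i" "0 < j" "i*a + j*b = n" "a \<noteq> 0" "b \<noteq> 0" unfolding Q_def by (auto intro!: Nat.gr0I)
    have "a \<le> n" using le_of_mult[OF h(1) h(3)] .
    moreover have "b \<le> n" using le_of_mult[of j b "i*a" n] h by (simp add: add.commute)
    moreover have "i \<le> n" using le_of_mult[of a i "j*b" n] h by (simp add: mult.commute)
    moreover have "j \<le> n" using le_of_mult[of b j "i*a" n] h by (simp add: mult.commute add.commute)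
    ultimately show "x \<in> {..n} \<times> {..n} \<times> {..n} \<times> {..n}" using x by auto
  qed
  thus ?thesis by (rule finite_subset) auto
qed

lemma card_Q_Q2:
  assumes "n > 0"
  shows "card (Q l1 l2 n) = 2 * card (Q2 l1 l2 n) + (\<Sum>a\<in>Dset l1 l2 n. n div a - 1)"
proof -
  let ?sw = "\<lambda>(a,i,b,j). (b,j,a,i)"
  let ?g = "\<lambda>(a,i). (a,i,a,n div a - i)"
  define Qd where "Qd = {(a,i,b,j). (a,i,b,j) \<in> Q l1 l2 n \<and> a = b}"
  have decomp: "Q l1 l2 n = Q2 l1 l2 n \<union> (?sw ` Q2 l1 l2 n \<union> Qd)"
  proof (intro equalityI subsetI)
    fix x assume "x \<in> Q l1 l2 n"
    then obtain a i b j where x: "x = (a,i,b,j)" "(a,i,b,j) \<in> Q l1 l2 n" by (cases x) auto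
    consider "a < b" | "b < a" | "a = b" by linarith
    thus "x \<in> Q2 l1 l2 n \<union> (?sw ` Q2 l1 l2 n \<union> Qd)"
    proof cases
      case 2
      hence "(b,j,a,i) \<in> Q2 l1 l2 n" using x unfolding Q_def Q2_def by auto
      hence "?sw (b,j,a,i) \<in> ?sw ` Q2 l1 l2 n" by (rule imageI)
      thus ?thesis using x by auto
    qed (use x in \<open>auto simp: Q_def Q2_def Qd_def\<close>)
  next
    fix x assume "x \<in> Q2 l1 l2 n \<union> (?sw ` Q2 l1 l2 n \<union> Qd)"
    thus "x \<in> Q l1 l2 n" unfolding Q_def Q2_def Qd_def by (auto simp: add.commute)
  qed
  have fQ2: "finite (Q2 l1 l2 n)"
    by (rule finite_subset[OF _ Q_finite[of l1 l2 n]]) (auto simp: Q_def Q2_def)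
  have fQd: "finite Qd"
    by (rule finite_subset[OF _ Q_finite[of l1 l2 n]]) (auto simp: Qd_def)
  have inj_sw: "inj_on ?sw (Q2 l1 l2 n)" by (rule inj_onI) auto
  have d1: "Q2 l1 l2 n \<inter> (?sw ` Q2 l1 l2 n \<union> Qd) = {}" unfolding Q2_def Qd_def by auto
  have d2: "?sw ` Q2 l1 l2 n \<inter> Qd = {}" unfolding Q2_def Qd_def by auto
  have Qd_eq: "Qd = ?g ` (SIGMA a:Dset l1 l2 n. {1..<n div a})"
  proof (intro equalityI subsetI)
    fix x assume "x \<in> Qd"
    then obtain a i j where x: "x = (a,i,a,j)" "(a,i,a,j) \<in> Q l1 l2 n" unfolding Qd_def by auto
    hence h: "i*a + j*a = n" "0<i" "0<j" "\<not> l1 dvd a" "\<not> l2 dvd a" unfolding Q_def by auto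
    hence "(i+j)*a = n" by (simp add: algebra_simps)
    hence "a dvd n" "n div a = i + j" using assms by auto
    hence "(a,i) \<in> (SIGMA a:Dset l1 l2 n. {1..<n div a})" "j = n div a - i"
      using h unfolding Dset_def by auto
    thus "x \<in> ?g ` (SIGMA a:Dset l1 l2 n. {1..<n div a})" using x by force
  next
    fix x assume "x \<in> ?g ` (SIGMA a:Dset l1 l2 n. {1..<n div a})"
    then obtain a i where ai: "a \<in> Dset l1 l2 n" "1 \<le> i" "i < n div a" "x = (a,i,a,n div a - i)" by auto
    hence "a dvd n" "\<not> l1 dvd a" "\<not> l2 dvd a" unfolding Dset_def by auto
    hence "i * a + (n div a - i) * a = (i + (n div a - i)) * a" by (simp add: algebra_simps)
    also have "i + (n div a - i) = n div a" using ai(3) by simp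
    also have "n div a * a = n" using \<open>a dvd n\<close> by simp
    finally have "i * a + (n div a - i) * a = n" .
    thus "x \<in> Qd" using ai \<open>\<not> l1 dvd a\<close> \<open>\<not> l2 dvd a\<close> unfolding Qd_def Q_def by auto
  qed
  have inj_g: "inj_on ?g (SIGMA a:Dset l1 l2 n. {1..<n div a})" by (rule inj_onI) auto
  have "card Qd = (\<Sum>a\<in>Dset l1 l2 n. n div a - 1)"
    unfolding Qd_eq using inj_g Dset_finite[OF assms]
    by (simp add: card_image)
  have "card (Q l1 l2 n) = card (Q2 l1 l2 n) + (card (?sw ` Q2 l1 l2 n) + card Qd)"
    unfolding decomp using fQ2 fQd d1 d2
    by (simp add: card_Un_disjoint)
  also have "card (?sw ` Q2 l1 l2 n) = card (Q2 l1 l2 n)" using inj_sw by (simp add: card_image)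
  finally show ?thesis using \<open>card Qd = _\<close> by simp
qed

lemma card_Q_conv:
  assumes "n > 0"
  shows "card (Q l1 l2 n) = (\<Sum>u\<in>{1..<n}. card (Dset l1 l2 u) * card (Dset l1 l2 (n - u)))"
proof -
  let ?g = "\<lambda>(u,(a,b)). (a, u div a, b, (n - u) div b)"
  let ?A = "SIGMA u:{1..<n}. Dset l1 l2 u \<times> Dset l1 l2 (n - u)"
  have eq: "Q l1 l2 n = ?g ` ?A"
  proof (intro equalityI subsetI)
    fix x assume "x \<in> Q l1 l2 n"
    then obtain a i b j where x: "x = (a,i,b,j)" "(a,i,b,j) \<in> Q l1 l2 n" by (cases x) auto
    hence h: "i*a + j*b = n" "0<i" "0<j" "\<not> l1 dvd a" "\<not> l2 dvd a" "\<not> l1 dvd b" "\<not> l2 dvd b"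
      unfolding Q_def by auto
    hence nz: "a \<noteq> 0" "b \<noteq> 0" using h(4,6) by (metis dvd_0_right)+
    have "i*a \<in> {1..<n}" using h nz by auto
    moreover have "n - i*a = j*b" using h by auto
    ultimately have "(i*a, (a, b)) \<in> ?A" using h unfolding Dset_def by auto
    moreover have "?g (i*a, (a,b)) = x" using x nz \<open>n - i*a = j*b\<close> by auto
    ultimately show "x \<in> ?g ` ?A" by (intro rev_image_eqI[where x="(i*a,(a,b))"]) auto
  next
    fix x assume "x \<in> ?g ` ?A"
    then obtain u a b where u: "u \<in> {1..<n}" "a \<in> Dset l1 l2 u" "b \<in> Dset l1 l2 (n-u)"
      "x = (a, u div a, b, (n - u) div b)" by auto
    hence h: "a dvd u" "b dvd (n-u)" "\<not> l1 dvd a" "\<not> l2 dvd a" "\<not> l1 dvd b" "\<not> l2 dvd b"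
      unfolding Dset_def by auto
    have "u div a * a + (n-u) div b * b = n" using h u(1) by auto
    moreover have "u div a > 0" using h u(1) by (auto intro!: Nat.gr0I dest: dvd_imp_le simp: div_greater_zero_iff)
    moreover have "(n-u) div b > 0" using h u(1) by (auto intro!: Nat.gr0I dest: dvd_imp_le simp: div_greater_zero_iff)
    ultimately show "x \<in> Q l1 l2 n" using h u(4) unfolding Q_def by auto
  qed
  have inj: "inj_on ?g ?A"
  proof (rule inj_onI)
    fix x y assume x: "x \<in> ?A" and y: "y \<in> ?A" and e: "?g x = ?g y"
    obtain u a b where xe: "x = (u,(a,b))" by (cases x) auto
    obtain u' a' b' where ye: "y = (u',(a',b'))" by (cases y) auto
    have "a dvd u" "a' dvd u'" using x y xe ye unfolding Dset_def by auto
    moreover have "a = a'" "u div a = u' div a'" using e xe ye by auto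
    ultimately have "u = u'" by (metis dvd_div_mult_self)
    thus "x = y" using e xe ye by auto
  qed
  have "card (Q l1 l2 n) = card ?A" unfolding eq using inj by (simp add: card_image)
  also have "\<dots> = (\<Sum>u\<in>{1..<n}. card (Dset l1 l2 u \<times> Dset l1 l2 (n - u)))"
    by (rule card_SigmaI) (auto intro!: finite_cartesian_product Dset_finite)
  also have "\<dots> = (\<Sum>u\<in>{1..<n}. card (Dset l1 l2 u) * card (Dset l1 l2 (n - u)))"
    by (simp add: card_cartesian_product)
  finally show ?thesis .
qed

lemma Dset_swap: "Dset l1 l2 u = Dset l2 l1 u" unfolding Dset_def by auto

lemma not_pow_dvd:
  assumes "prime (p::nat)" "\<not> p dvd e" "y < k"
  shows "\<not> p^k dvd p^y * e"
proof
  assume h: "p^k dvd p^y * e"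
  have "p^k = p^y * p^(k-y)" using assms(3) by (simp add: power_add[symmetric])
  with h have "p^y * p^(k-y) dvd p^y * e" by simp
  hence "p^(k-y) dvd e" using assms(1) by (simp add: prime_gt_0_nat)
  moreover have "p dvd p^(k-y)" using assms(3) by (simp add: dvd_power)
  ultimately show False using assms(2) by (meson dvd_trans)
qed

lemma Dset_decomp:
  assumes p: "prime (p::nat)" and m: "\<not> p dvd m" and r: "coprime r p"
  shows "Dset (p^k) r (p^b * m) = (\<lambda>(y,e). p^y * e) ` ({y. y \<le> b \<and> y < k} \<times> {e. e dvd m \<and> \<not> r dvd e})"
proof (intro equalityI subsetI)
  fix d assume "d \<in> Dset (p^k) r (p^b * m)"
  hence d: "d dvd p^b * m" "\<not> p^k dvd d" "\<not> r dvd d" unfolding Dset_def by auto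
  obtain d1 d2 where d12: "d = d1 * d2" "d1 dvd p^b" "d2 dvd m"
    using division_decomp[OF d(1)] by blast
  obtain y where y: "y \<le> b" "d1 = p^y" using d12(2) divides_primepow_nat[OF p] by blast
  have "y < k"
  proof (rule ccontr)
    assume "\<not> y < k"
    hence "p^k dvd p^y" by (simp add: le_imp_power_dvd)
    hence "p^k dvd d" using d12(1) y(2) by (simp add: dvd_mult2)
    thus False using d(2) by simp
  qed
  moreover have "\<not> r dvd d2" using d(3) d12(1) by (metis dvd_mult)
  ultimately show "d \<in> (\<lambda>(y,e). p^y * e) ` ({y. y \<le> b \<and> y < k} \<times> {e. e dvd m \<and> \<not> r dvd e})"
    using y d12 by (intro rev_image_eqI[where x="(y,d2)"]) auto
next
  fix d assume "d \<in> (\<lambda>(y,e). p^y * e) ` ({y. y \<le> b \<and> y < k} \<times> {e. e dvd m \<and> \<not> r dvd e})"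
  then obtain y e where ye: "y \<le> b" "y < k" "e dvd m" "\<not> r dvd e" "d = p^y * e" by auto
  have pe: "\<not> p dvd e" using ye(3) m by (meson dvd_trans)
  have "d dvd p^b * m" using ye by (simp add: le_imp_power_dvd mult_dvd_mono)
  moreover have "\<not> p^k dvd d" using not_pow_dvd[OF p pe ye(2)] ye(5) by simp
  moreover have "coprime r (p^y)" using r by simp
  hence "\<not> r dvd d" using ye(4,5) by (simp add: coprime_dvd_mult_right_iff)
  ultimately show "d \<in> Dset (p^k) r (p^b * m)" unfolding Dset_def by auto
qed

lemma pow_mult_inj:
  assumes p: "prime (p::nat)" and m: "\<not> p dvd m"
  shows "inj_on (\<lambda>(y,e). p^y * e) (A \<times> {e. e dvd m \<and> P e})"
proof (rule inj_onI)
  fix x z assume x: "x \<in> A \<times> {e. e dvd m \<and> P e}" and z: "z \<in> A \<times> {e. e dvd m \<and> P e}"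
    and e: "(\<lambda>(y,e). p^y * e) x = (\<lambda>(y,e). p^y * e) z"
  obtain y e where xe: "x = (y,e)" by (cases x) auto
  obtain y' e' where ze: "z = (y',e')" by (cases z) auto
  have pe: "\<not> p dvd e" "\<not> p dvd e'" using x z xe ze m by (auto dest: dvd_trans)
  have eq: "p^y * e = p^y' * e'" using e xe ze by simp
  have p0: "p \<noteq> 0" using p by auto
  have "multiplicity p (p^y * e) = y" by (rule multiplicity_decomposeI[OF refl pe(1) p0])
  moreover have "multiplicity p (p^y' * e') = y'" by (rule multiplicity_decomposeI[OF refl pe(2) p0])
  ultimately have "y = y'" using eq by simp
  with eq have "e = e'" using p0 by simp
  thus "x = z" using xe ze \<open>y = y'\<close> by simp
qed

lemma card_Dset_decomp:
  assumes p: "prime (p::nat)" and m: "\<not> p dvd m" and r: "coprime r p"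
  shows "card (Dset (p^k) r (p^b * m)) = min (b+1) k * card {e. e dvd m \<and> \<not> r dvd e}"
proof -
  have m0: "m \<noteq> 0"
  proof
    assume "m = 0" thus False using m by simp
  qed
  have fin: "finite {e. e dvd m \<and> \<not> r dvd e}"
    by (rule finite_subset[of _ "{..m}"]) (use m0 in \<open>auto dest: dvd_imp_le\<close>)
  have Y: "{y. y \<le> b \<and> y < k} = {..<min (b+1) k}" by auto
  have "card (Dset (p^k) r (p^b * m)) = card ({y. y \<le> b \<and> y < k} \<times> {e. e dvd m \<and> \<not> r dvd e})"
    unfolding Dset_decomp[OF assms] by (rule card_image[OF pow_mult_inj[OF p m]])
  also have "\<dots> = min (b+1) k * card {e. e dvd m \<and> \<not> r dvd e}"
    unfolding Y by (simp add: card_cartesian_product)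
  finally show ?thesis .
qed

lemma sq_mod4: "(s::nat) * s mod 4 \<noteq> 3"
proof -
  have h: "s * s mod 4 = ((s mod 4) * (s mod 4)) mod 4" by (simp add: mod_mult_eq)
  have "s mod 4 \<in> {0,1,2,3}" by auto
  thus ?thesis using h by auto
qed

lemma sq_mod3: "(s::nat) * s mod 3 \<noteq> 2"
proof -
  have h: "s * s mod 3 = ((s mod 3) * (s mod 3)) mod 3" by (simp add: mod_mult_eq)
  have "s mod 3 \<in> {0,1,2}" by auto
  thus ?thesis using h by auto
qed

lemma even_card_divisors:
  assumes m0: "(m::nat) > 0" and nsq: "\<And>s. m \<noteq> s * s"
  shows "even (card {e. e dvd m})"
proof -
  let ?A = "{e. e dvd m}"
  define L where "L = {e\<in>?A. e * e < m}"
  define R where "R = {e\<in>?A. m < e * e}"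
  have finA: "finite ?A" by (rule finite_subset[of _ "{..m}"]) (use m0 in \<open>auto dest: dvd_imp_le\<close>)
  have AU: "?A = L \<union> R" unfolding L_def R_def using nsq by (auto simp: linorder_neq_iff)
  have disj: "L \<inter> R = {}" unfolding L_def R_def by auto
  have key: "m div e \<in> R \<and> m div (m div e) = e" if "e \<in> L" for e
  proof -
    have e: "e dvd m" "e * e < m" using that unfolding L_def by auto
    define f where "f = m div e"
    have ef: "e * f = m" using e(1) unfolding f_def by simp
    have "e > 0" using e(1) m0 by (auto intro!: Nat.gr0I)
    have "e < f" using e(2) ef \<open>e > 0\<close> by (metis mult_less_cancel1)
    hence "e * f < f * f" using \<open>e > 0\<close> by (intro mult_strict_right_mono) auto
    hence "m < f * f" using ef by simp
    moreover have "f dvd m" using ef by (metis dvd_triv_right)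
    moreover have "m div f = e" using ef \<open>e < f\<close> by (metis div_mult_self1_is_m mult.commute gr_zeroI not_less0)
    ultimately show ?thesis unfolding R_def f_def by auto
  qed
  have key2: "m div e \<in> L \<and> m div (m div e) = e" if "e \<in> R" for e
  proof -
    have e: "e dvd m" "m < e * e" using that unfolding R_def by auto
    define f where "f = m div e"
    have ef: "e * f = m" using e(1) unfolding f_def by simp
    have "e > 0" using e(1) m0 by (auto intro!: Nat.gr0I)
    have "f < e" using e(2) ef \<open>e > 0\<close> by (metis mult_less_cancel1)
    hence "f * f < e * f" using ef m0 by (metis mult_less_cancel2 nat_0_less_mult_iff)
    hence "f * f < m" using ef by simp
    moreover have "f dvd m" using ef by (metis dvd_triv_right)
    moreover have "m div f = e" using ef m0 by (metis div_mult_self1_is_m mult.commute nat_0_less_mult_iff)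
    ultimately show ?thesis unfolding L_def f_def by auto
  qed
  have "R = (\<lambda>e. m div e) ` L"
  proof (intro equalityI subsetI)
    fix e assume "e \<in> R" thus "e \<in> (\<lambda>e. m div e) ` L" using key2 by (metis image_eqI)
  next
    fix x assume "x \<in> (\<lambda>e. m div e) ` L" thus "x \<in> R" using key by auto
  qed
  moreover have "inj_on (\<lambda>e. m div e) L" using key by (metis inj_onI)
  ultimately have "card R = card L" by (simp add: card_image)
  moreover have "card ?A = card L + card R" unfolding AU
    by (rule card_Un_disjoint) (use finA AU disj in auto)
  ultimately show ?thesis by simp
qed

definition chi :: "nat \<Rightarrow> int" where
  "chi k = (if k mod 4 = 1 then 1 else if k mod 4 = 3 then -1 else 0)"

lemma chi_mult: "chi (a * b) = chi a * chi b"
proof -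
  have h: "a * b mod 4 = ((a mod 4) * (b mod 4)) mod 4" by (simp add: mod_mult_eq)
  have "a mod 4 \<in> {0,1,2,3}" "b mod 4 \<in> {0,1,2,3}" by auto
  thus ?thesis unfolding chi_def using h by auto
qed

lemma chi3: "chi 3 = -1" by (simp add: chi_def)
lemma chi1: "chi (Suc 0) = 1" by (simp add: chi_def)

lemma chi_pow3: "chi (3^k) = (-1)^k"
  by (induction k) (simp_all add: chi_mult chi3 chi1)

lemma chi_odd: "odd k \<Longrightarrow> chi k = 1 \<or> chi k = -1"
  unfolding chi_def by presburger

lemma chi_cong: "odd k \<Longrightarrow> 4 dvd (2 - int k - chi k)"
  unfolding chi_def by presburger

lemma chi_div_sum0:
  assumes "m mod 4 = 3"
  shows "(\<Sum>e\<in>{e. e dvd m}. chi (m div e)) = 0"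
proof (rule sum_involution_eq_0[where h = "\<lambda>e. m div e"])
  have m0: "m > 0" using assms by (auto intro!: Nat.gr0I)
  have om: "odd m" using assms by presburger
  fix e assume e: "e \<in> {e. e dvd m}"
  hence ed: "e dvd m" by simp
  have ef: "e * (m div e) = m" using ed by simp
  have f0: "m div e \<noteq> 0" using ef m0 by (metis mult_0_right less_irrefl)
  have me: "m div (m div e) = e"
  proof -
    have "m div (m div e) = (e * (m div e)) div (m div e)" using ef by simp
    also have "\<dots> = e" using f0 by simp
    finally show ?thesis .
  qed
  show "m div e \<in> {e. e dvd m}" using ed by auto
  show "m div (m div e) = e" by (rule me)
  show "m div e \<noteq> e"
  proof
    assume "m div e = e"
    hence "m = e * e" using ed by (metis dvd_mult_div_cancel)
    thus False using assms sq_mod4[of e] by simp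
  qed
  have oe: "odd e" "odd (m div e)" using ef om by (metis even_mult_iff)+
  have "chi e * chi (m div e) = chi m" using ed by (simp add: chi_mult[symmetric])
  also have "chi m = -1" using assms unfolding chi_def by simp
  finally show "chi (m div (m div e)) + chi (m div e) = 0"
    using me chi_odd[OF oe(1)] chi_odd[OF oe(2)] by auto
qed

lemma alt_sum0:
  "2 * j \<le> b + 1 \<Longrightarrow> (\<Sum>y<2*j. (-1::int)^(b - y)) = 0"
proof (induction j)
  case (Suc j)
  hence j: "2*j + 1 \<le> b" by simp
  hence "(\<Sum>y<2*j. (-1::int)^(b - y)) = 0" using Suc by auto
  moreover have "(-1::int)^(b - 2*j) + (-1)^(b - (2*j+1)) = 0"
  proof -
    have "b - 2*j = Suc (b - (2*j+1))" using j by simp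
    thus ?thesis by simp
  qed
  ultimately show ?case by simp
qed simp

lemma cop23: "coprime (2^a) (3::nat)" "coprime (3^a) (2::nat)"
proof -
  have c: "coprime (3::nat) 2" using coprime_Suc_left_nat[of 2] by (simp add: numeral_3_eq_3)
  show "coprime (2^a) (3::nat)" using c by (simp add: coprime_commute)
  show "coprime (3^a) (2::nat)" using c by simp
qed

lemma odd_case:
  assumes n4: "n mod 4 = 3" and a1: "\<alpha> \<ge> 1" and hb: "even \<beta> \<or> \<not> 3 dvd n"
  shows "even (card (Dset (2^\<alpha>) (3^\<beta>) n)) \<and> (\<Sum>a\<in>Dset (2^\<alpha>) (3^\<beta>) n. chi (n div a)) = 0"
proof -
  have n0: "n \<noteq> 0" using n4 by auto
  have on: "odd n" using n4 by presburger
  obtain m where m: "n = 3^(multiplicity 3 n) * m" "\<not> 3 dvd m"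
    using multiplicity_decompose'[OF n0, of 3] by auto
  define b where "b = multiplicity 3 n"
  have nb: "n = 3^b * m" using m b_def by simp
  have om: "odd m" using on nb by simp
  have m0: "m > 0" using om by (auto intro!: Nat.gr0I)
  have E: "{e. e dvd m \<and> \<not> 2^\<alpha> dvd e} = {e. e dvd m}"
  proof -
    have "\<not> 2^\<alpha> dvd e" if "e dvd m" for e
    proof
      assume "2^\<alpha> dvd e"
      moreover have "2 dvd (2::nat)^\<alpha>" using a1 by (simp add: dvd_power)
      ultimately have "2 dvd m" using that by (meson dvd_trans)
      thus False using om by simp
    qed
    thus ?thesis by auto
  qed
  let ?Y = "{y. y \<le> b \<and> y < \<beta>}"
  let ?E = "{e. e dvd m \<and> \<not> 2^\<alpha> dvd e}"
  have p3: "prime (3::nat)" by simp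
  have sw: "Dset (2^\<alpha>) (3^\<beta>) n = Dset (3^\<beta>) (2^\<alpha>) (3^b * m)"
    using Dset_swap nb by simp
  have Ds: "Dset (2^\<alpha>) (3^\<beta>) n = (\<lambda>(y,e). 3^y*e) ` (?Y \<times> ?E)"
    unfolding sw by (rule Dset_decomp[OF p3 m(2) cop23(1)])
  have card: "card (Dset (2^\<alpha>) (3^\<beta>) n) = min (b+1) \<beta> * card {e. e dvd m}"
    unfolding sw card_Dset_decomp[OF p3 m(2) cop23(1)] E ..
  have inj: "inj_on (\<lambda>(y,e). 3^y*e) (?Y \<times> ?E)" by (rule pow_mult_inj[OF p3 m(2)])
  have tm: "chi (n div (3^y*e)) = (-1)^(b-y) * chi (m div e)" if "y \<le> b" "e dvd m" for y e
  proof -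
    have "n = (3^y * e) * (3^(b-y) * (m div e))"
      using that nb by (simp add: power_add[symmetric] algebra_simps)
    moreover have "3^y * e > 0" using that m0 by (auto intro!: Nat.gr0I)
    ultimately have "n div (3^y*e) = 3^(b-y) * (m div e)" by (metis nonzero_mult_div_cancel_left less_irrefl)
    thus ?thesis by (simp add: chi_mult chi_pow3)
  qed
  have "(\<Sum>a\<in>Dset (2^\<alpha>) (3^\<beta>) n. chi (n div a)) = (\<Sum>(y,e)\<in>?Y \<times> ?E. chi (n div (3^y*e)))"
    unfolding Ds by (subst sum.reindex[OF inj]) (simp add: case_prod_unfold)
  also have "\<dots> = (\<Sum>(y,e)\<in>?Y \<times> ?E. (-1)^(b-y) * chi (m div e))"
    by (rule sum.cong) (auto simp: tm)
  also have "\<dots> = (\<Sum>y\<in>?Y. (-1::int)^(b-y)) * (\<Sum>e\<in>{e. e dvd m}. chi (m div e))"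
    by (simp add: sum_product sum.cartesian_product E)
  finally have S: "(\<Sum>a\<in>Dset (2^\<alpha>) (3^\<beta>) n. chi (n div a)) =
      (\<Sum>y\<in>?Y. (-1::int)^(b-y)) * (\<Sum>e\<in>{e. e dvd m}. chi (m div e))" .
  have "m mod 4 = 1 \<or> m mod 4 = 3" using om by presburger
  thus ?thesis
  proof
    assume m3: "m mod 4 = 3"
    have "even (card {e. e dvd m})"
      by (rule even_card_divisors[OF m0]) (use m3 sq_mod4 in metis)
    moreover have "(\<Sum>e\<in>{e. e dvd m}. chi (m div e)) = 0" by (rule chi_div_sum0[OF m3])
    ultimately show ?thesis using card S by simp
  next
    assume m1: "m mod 4 = 1"
    have "chi n = (-1)^b * chi m" using nb by (simp add: chi_mult chi_pow3)
    moreover have "chi n = -1" "chi m = 1" using n4 m1 by (simp_all add: chi_def)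
    ultimately have ob: "odd b" by (metis mult.right_neutral neg_one_even_power one_neq_neg_one)
    hence "3 dvd n" using nb by (metis dvd_mult2 dvd_power odd_pos)
    hence eb: "even \<beta>" using hb by simp
    define K where "K = min (b+1) \<beta>"
    have eK: "even K" using ob eb unfolding K_def by (simp add: min_def)
    then obtain j where j: "K = 2*j" by blast
    have Y: "?Y = {..<2*j}" using j unfolding K_def by auto
    have "2*j \<le> b+1" using j unfolding K_def by simp
    hence "(\<Sum>y\<in>?Y. (-1::int)^(b-y)) = 0" unfolding Y by (rule alt_sum0)
    thus ?thesis using S card eK unfolding K_def by simp
  qed
qed

lemma twomod4:
  assumes "v mod 4 = 2" "\<alpha> \<ge> 2"
  shows "even (card (Dset (2^\<alpha>) (3^\<beta>) v))"
proof -
  have "v = 2 * (v div 2)" using assms(1) by presburger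
  hence v: "v = 2^1 * (v div 2)" by simp
  have nd: "\<not> 2 dvd (v div 2)" using assms(1) by presburger
  have "card (Dset (2^\<alpha>) (3^\<beta>) v) = min (1+1) \<alpha> * card {e. e dvd (v div 2) \<and> \<not> 3^\<beta> dvd e}"
    using card_Dset_decomp[of 2 "v div 2" "3^\<beta>" \<alpha> 1] nd cop23(2) v by simp
  thus ?thesis using assms(2) by (simp add: min_def)
qed

lemma pow4_mod3: "(4::nat)^j mod 3 = 1"
  by (induction j) (simp_all add: mod_mult_eq[symmetric, of 4])

lemma mod3_lemma:
  assumes "even v" "v > 0" "v mod 3 = 2" "even \<alpha>" "\<alpha> \<ge> 2" "\<beta> \<ge> 1"
  shows "even (card (Dset (2^\<alpha>) (3^\<beta>) v))"
proof -
  have v0: "v \<noteq> 0" using assms by simp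
  obtain m where m: "v = 2^(multiplicity 2 v) * m" "\<not> 2 dvd m"
    using multiplicity_decompose'[OF v0, of 2] by auto
  define b where "b = multiplicity 2 v"
  have vb: "v = 2^b * m" using m b_def by simp
  have m0: "m > 0" using m(2) by (auto intro!: Nat.gr0I)
  have n3: "\<not> 3 dvd m"
  proof
    assume "3 dvd m" hence "3 dvd v" using vb by simp
    thus False using assms(3) by presburger
  qed
  have E: "{e. e dvd m \<and> \<not> 3^\<beta> dvd e} = {e. e dvd m}"
  proof -
    have "\<not> 3^\<beta> dvd e" if "e dvd m" for e
    proof
      assume "3^\<beta> dvd e"
      moreover have "3 dvd (3::nat)^\<beta>" using assms(6) by (simp add: dvd_power)
      ultimately have "3 dvd m" using that by (meson dvd_trans)
      thus False using n3 by simp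
    qed
    thus ?thesis by auto
  qed
  have card: "card (Dset (2^\<alpha>) (3^\<beta>) v) = min (b+1) \<alpha> * card {e. e dvd m}"
    using card_Dset_decomp[of 2 m "3^\<beta>" \<alpha> b] m(2) cop23(2) vb E by simp
  show ?thesis
  proof (cases "even b")
    case False
    hence "even (min (b+1) \<alpha>)" using assms(4) by (simp add: min_def)
    thus ?thesis using card by simp
  next
    case True
    then obtain j where j: "b = 2*j" by blast
    have "2^b = (4::nat)^j" using j by (simp add: power_mult)
    hence "2^b mod 3 = (1::nat)" using pow4_mod3 by simp
    hence "v mod 3 = m mod 3" using vb by (metis mod_mult_left_eq mult_1)
    hence m3: "m mod 3 = 2" using assms(3) by simp
    have "even (card {e. e dvd m})"
      by (rule even_card_divisors[OF m0]) (use m3 sq_mod3 in metis)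
    thus ?thesis using card by simp
  qed
qed

lemma pair_even:
  assumes n4: "n mod 4 = 3" and H: "even \<beta> \<or> (even \<alpha> \<and> n mod 3 = 2)" and a2: "\<alpha> \<ge> 2" and b1: "\<beta> \<ge> 1"
    and xy: "x + y = n" "x > 0" "even x"
  shows "even (card (Dset (2^\<alpha>) (3^\<beta>) x) * card (Dset (2^\<alpha>) (3^\<beta>) y))"
proof (cases "even (card (Dset (2^\<alpha>) (3^\<beta>) x))")
  case True thus ?thesis by simp
next
  case False
  note xo = False
  have "x mod 4 \<noteq> 2" using twomod4[OF _ a2] xo by blast
  hence "x mod 4 = 0" using xy(3) by presburger
  hence y4: "y mod 4 = 3" using xy(1) n4 by presburger
  have "even \<beta> \<or> \<not> 3 dvd y"
  proof (cases "even \<beta>")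
    case False
    hence ea: "even \<alpha>" and n3: "n mod 3 = 2" using H by auto
    have "x mod 3 \<noteq> 2" using mod3_lemma[OF xy(3) xy(2) _ ea a2 b1] xo by blast
    hence "\<not> 3 dvd y" using xy(1) n3 by presburger
    thus ?thesis by simp
  qed simp
  moreover have "\<alpha> \<ge> 1" using a2 by simp
  ultimately have "even (card (Dset (2^\<alpha>) (3^\<beta>) y))" using odd_case[OF y4] by blast
  thus ?thesis by simp
qed

lemma sym_sum4:
  fixes g :: "nat \<Rightarrow> nat"
  assumes on: "odd n" and ev: "\<And>u. u \<in> {1..<n} \<Longrightarrow> even (g u)"
    and sy: "\<And>u. u \<in> {1..<n} \<Longrightarrow> g (n - u) = g u"
  shows "4 dvd (\<Sum>u\<in>{1..<n}. g u)"
proof -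
  define L where "L = {u\<in>{1..<n}. 2*u < n}"
  define R where "R = {u\<in>{1..<n}. n < 2*u}"
  have U: "{1..<n} = L \<union> R"
  proof -
    have "2*u \<noteq> n" for u using on by presburger
    thus ?thesis unfolding L_def R_def by (auto simp: linorder_neq_iff)
  qed
  have disj: "L \<inter> R = {}" unfolding L_def R_def by auto
  have RL: "R = (\<lambda>u. n - u) ` L"
  proof (intro equalityI subsetI)
    fix u assume "u \<in> R"
    hence "n - u \<in> L" "u = n - (n - u)" unfolding L_def R_def by auto
    thus "u \<in> (\<lambda>u. n - u) ` L" by (metis image_eqI)
  next
    fix u assume "u \<in> (\<lambda>u. n - u) ` L"
    thus "u \<in> R" unfolding L_def R_def by auto
  qed
  have inj: "inj_on (\<lambda>u. n - u) L" unfolding L_def by (rule inj_onI) auto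
  have "sum g R = sum (\<lambda>u. g (n-u)) L" unfolding RL by (simp add: sum.reindex[OF inj])
  also have "\<dots> = sum g L" by (rule sum.cong) (auto simp: L_def sy)
  finally have "sum g {1..<n} = 2 * sum g L" unfolding U
    by (subst sum.union_disjoint) (auto simp: disj L_def R_def)
  moreover have "2 dvd sum g L" by (rule dvd_sum) (auto simp: L_def ev)
  ultimately show ?thesis by auto
qed

lemma main8:
  assumes a2: "\<alpha> \<ge> 2" and b1: "\<beta> \<ge> 1" and n4: "n mod 4 = 3" and H: "even \<beta> \<or> (even \<alpha> \<and> n mod 3 = 2)"
  shows "8 dvd Bbar (2^\<alpha>) (3^\<beta>) n"
proof -
  define l1 :: nat where "l1 = 2^\<alpha>"
  define l2 :: nat where "l2 = 3^\<beta>"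
  have n0: "n > 0" using n4 by (auto intro!: Nat.gr0I)
  have on: "odd n" using n4 by presburger
  obtain k where "Bbar l1 l2 n = 2 * card {P\<in>Pset l1 l2 n. card (set_mset P) = 1}
                + 4 * card {P\<in>Pset l1 l2 n. card (set_mset P) = 2} + 8 * k"
    using Bbar_mod8[OF n0] by blast
  hence Bk: "Bbar l1 l2 n = 2 * card (Dset l1 l2 n) + 4 * card (Q2 l1 l2 n) + 8 * k"
    using card_P1[OF n0] card_P2 by simp
  have cq: "card (Q l1 l2 n) = 2 * card (Q2 l1 l2 n) + (\<Sum>a\<in>Dset l1 l2 n. n div a - 1)"
    by (rule card_Q_Q2[OF n0])
  have q4: "4 dvd card (Q l1 l2 n)"
    unfolding card_Q_conv[OF n0]
  proof (rule sym_sum4[OF on])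
    fix u assume u: "u \<in> {1..<n}"
    show "card (Dset l1 l2 (n - u)) * card (Dset l1 l2 (n - (n - u))) = card (Dset l1 l2 u) * card (Dset l1 l2 (n - u))"
      using u by simp
    show "even (card (Dset l1 l2 u) * card (Dset l1 l2 (n - u)))"
    proof (cases "even u")
      case True thus ?thesis using pair_even[OF n4 H a2 b1, of u "n-u"] u unfolding l1_def l2_def by auto
    next
      case False
      hence "even (n-u)" using on u by simp
      thus ?thesis using pair_even[OF n4 H a2 b1, of "n-u" u] u unfolding l1_def l2_def by (auto simp: mult.commute)
    qed
  qed
  have "even \<beta> \<or> \<not> 3 dvd n" using H by presburger
  hence sc: "(\<Sum>a\<in>Dset l1 l2 n. chi (n div a)) = 0"
    using odd_case[OF n4, of \<alpha> \<beta>] a2 unfolding l1_def l2_def by auto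
  have fin: "finite (Dset l1 l2 n)" by (rule Dset_finite[OF n0])
  have oa: "odd (n div a) \<and> n div a \<ge> 1" if "a \<in> Dset l1 l2 n" for a
  proof -
    have "a dvd n" using that unfolding Dset_def by auto
    hence "n = a * (n div a)" by simp
    thus ?thesis using on n0 by (metis even_mult_iff less_one mult_0_right not_less neq0_conv)
  qed
  have d4: "4 dvd (\<Sum>a\<in>Dset l1 l2 n. 2 - int (n div a))"
  proof -
    have "(\<Sum>a\<in>Dset l1 l2 n. 2 - int (n div a)) =
          (\<Sum>a\<in>Dset l1 l2 n. 2 - int (n div a) - chi (n div a)) + (\<Sum>a\<in>Dset l1 l2 n. chi (n div a))"
      by (simp add: sum.distrib[symmetric])
    also have "\<dots> = (\<Sum>a\<in>Dset l1 l2 n. 2 - int (n div a) - chi (n div a))" using sc by simp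
    also have "4 dvd \<dots>" by (rule dvd_sum) (use oa chi_cong in blast)
    finally show ?thesis .
  qed
  have "int (card (Dset l1 l2 n)) - int (\<Sum>a\<in>Dset l1 l2 n. n div a - 1) = (\<Sum>a\<in>Dset l1 l2 n. 2 - int (n div a))"
  proof -
    have "int (\<Sum>a\<in>Dset l1 l2 n. n div a - 1) = (\<Sum>a\<in>Dset l1 l2 n. int (n div a) - 1)"
      unfolding of_nat_sum by (rule sum.cong) (use oa in auto)
    hence "int (card (Dset l1 l2 n)) - int (\<Sum>a\<in>Dset l1 l2 n. n div a - 1)
        = (\<Sum>a\<in>Dset l1 l2 n. 1) - (\<Sum>a\<in>Dset l1 l2 n. int (n div a) - 1)" by simp
    also have "\<dots> = (\<Sum>a\<in>Dset l1 l2 n. 1 - (int (n div a) - 1))" by (rule sum_subtractf[symmetric])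
    also have "\<dots> = (\<Sum>a\<in>Dset l1 l2 n. 2 - int (n div a))" by simp
    finally show ?thesis .
  qed
  with d4 obtain c1 where c1: "int (card (Dset l1 l2 n)) - int (\<Sum>a\<in>Dset l1 l2 n. n div a - 1) = 4 * c1"
    by (metis dvd_def)
  obtain c2 where c2: "card (Q l1 l2 n) = 4 * c2" using q4 by (metis dvd_def)
  define S where "S = (\<Sum>a\<in>Dset l1 l2 n. n div a - 1)"
  define D where "D = card (Dset l1 l2 n)"
  define q2 where "q2 = card (Q2 l1 l2 n)"
  have e1: "int (Bbar l1 l2 n) = 2 * int D + 4 * int q2 + 8 * int k" using Bk unfolding D_def q2_def by simp
  have e2: "4 * int c2 = 2 * int q2 + int S" using cq c2 unfolding S_def q2_def by (metis of_nat_add of_nat_mult of_nat_numeral)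
  have e3: "int D - int S = 4 * c1" using c1 unfolding D_def S_def .
  have "int (Bbar l1 l2 n) = 8 * (c1 + int c2 + int k)"
  proof -
    have "int (Bbar l1 l2 n) = 2 * (int D - int S) + 2 * (4 * int c2) + 8 * int k"
      using e1 e2 by (simp add: algebra_simps)
    also have "\<dots> = 8 * (c1 + int c2 + int k)" using e3 by (simp add: algebra_simps)
    finally show ?thesis .
  qed
  hence "(8::int) dvd int (Bbar l1 l2 n)" by simp
  hence "8 dvd Bbar l1 l2 n" by presburger
  thus ?thesis unfolding l1_def l2_def .
qed

theorem theorem4:
  fixes \<alpha> \<beta> n :: nat
  assumes "\<alpha> \<ge> 2" and "\<beta> \<ge> 1"
  shows "(((odd \<alpha> \<and> even \<beta>) \<or> (even \<alpha> \<and> even \<beta>)) \<longrightarrow>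
           (8 dvd Bbar (2 ^ \<alpha>) (3 ^ \<beta>) (12 * n + 3) \<and> 8 dvd Bbar (2 ^ \<alpha>) (3 ^ \<beta>) (12 * n + 7)))
       \<and> (((odd \<alpha> \<longleftrightarrow> even \<beta>) \<or> (even \<alpha> \<and> even \<beta>)) \<longrightarrow>
           8 dvd Bbar (2 ^ \<alpha>) (3 ^ \<beta>) (12 * n + 11))"
proof (intro conjI impI)
  assume "(odd \<alpha> \<and> even \<beta>) \<or> (even \<alpha> \<and> even \<beta>)"
  hence eb: "even \<beta>" by auto
  show "8 dvd Bbar (2 ^ \<alpha>) (3 ^ \<beta>) (12 * n + 3)"
    by (rule main8[OF assms]) (use eb in presburger)+
  show "8 dvd Bbar (2 ^ \<alpha>) (3 ^ \<beta>) (12 * n + 7)"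
    by (rule main8[OF assms]) (use eb in presburger)+
next
  assume "(odd \<alpha> \<longleftrightarrow> even \<beta>) \<or> (even \<alpha> \<and> even \<beta>)"
  hence "even \<beta> \<or> even \<alpha>" by auto
  thus "8 dvd Bbar (2 ^ \<alpha>) (3 ^ \<beta>) (12 * n + 11)"
    by (intro main8[OF assms]) presburger+
qed

end
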